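(* Fix $A\in\mathbb R$. There exist constants $C=C(A)$ and $K=K(A)$ such that for all sufficiently small $\epsilon>0$, every $t>0$ and all $x,y\in\mathbb Z_{\ge0}$, $$\mathbf p_t^R(x,y)\le C\,(t^{-1/2}+\epsilon)\,e^{K\epsilon^2t}.$$
   Context: Let $p_t(x)$, $x\in\mathbb Z$, denote the whole-line semi-discrete heat kernel, i.e. the solution of $\partial_tp_t(x)=\frac12\Delta p_t(x)$, $p_0(x)=1_{\{x=0\}}$, where $\Delta f(x)=f(x+1)+f(x-1)-2f(x)$. For $\epsilon>0$ let $\mu_A=1-A\epsilon$. The half-line Robin heat kernel is, for $t\ge0$ and $x,y\in\mathbb Z_{\ge0}$, $$\mathbf p_t^R(x,y)=p_t(x-y)+\mu_Ap_t(x+y+1)+(1-\mu_A^{-2})\sum_{z=2}^\infty p_t(x+y+z)\mu_A^z.$$ *)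

theory Defs
  imports "HOL-Analysis.Analysis"
begin

text \<open>Whole-line semi-discrete heat kernel: the solution of
  d/dt p_t(x) = (1/2)(p_t(x+1)+p_t(x-1)-2p_t(x)), p_0(x) = [x=0],
  given by its explicit closed form p_t(x) = e^{-t} I_{|x|}(t)
  (modified Bessel function of the first kind, as a power series).\<close>
definition heat_kernel :: "real \<Rightarrow> int \<Rightarrow> real" where
  "heat_kernel t x = exp (- t) *
     (\<Sum>k. (t / 2) ^ (2 * k + nat \<bar>x\<bar>) / (fact k * fact (k + nat \<bar>x\<bar>)))"

definition mu :: "real \<Rightarrow> real \<Rightarrow> real" where
  "mu A \<epsilon> = 1 - A * \<epsilon>"

text \<open>Half-line Robin heat kernel; the sum over z \<ge> 2 is indexed by z = n + 2.\<close>
definition robin_kernel :: "real \<Rightarrow> real \<Rightarrow> real \<Rightarrow> nat \<Rightarrow> nat \<Rightarrow> real" where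
  "robin_kernel A \<epsilon> t x y =
     heat_kernel t (int x - int y)
     + mu A \<epsilon> * heat_kernel t (int x + int y + 1)
     + (1 - (mu A \<epsilon>) powi (-2)) *
       (\<Sum>n. heat_kernel t (int x + int y + int (n + 2)) * (mu A \<epsilon>) ^ (n + 2))"

end

theory Submission
  imports Defs
begin

lemma cb_even: "(real ((2*j) choose j))^2 * (3*j+1) \<le> 16^j"
proof (induction j)
  case 0
  then show ?case by simp
next
  case (Suc j)
  define c where "c = real ((2*j) choose j)"
  have f1: "real ((2*j) choose j) = fact (2*j) / (fact j * fact j)"
    using binomial_fact[of j "2*j"] by simp
  have f2: "real ((2*Suc j) choose Suc j) = fact (2*Suc j) / (fact (Suc j) * fact (Suc j))"
    using binomial_fact[of "Suc j" "2*Suc j"] by simp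
  have ff: "(fact (2*Suc j) :: real) = (2*real j+2)*(2*real j+1)*fact (2*j)"
    by (simp add: algebra_simps)
  have fs: "(fact (Suc j) :: real) = (real j+1) * fact j" by simp
  have rel: "real ((2*Suc j) choose Suc j) = 2*(2*j+1)/(j+1) * c"
  proof -
    have a: "(fact (2*Suc j) :: real) / (fact (Suc j) * fact (Suc j))
      = ((2*real j+2)*(2*real j+1)) / ((real j+1)*(real j+1)) * (fact (2*j) / (fact j * fact j))"
      unfolding ff fs times_divide_times_eq by (simp only: mult_ac)
    have b: "((2*real j+2)*(2*real j+1)) / ((real j+1)*(real j+1)) = 2*(2*j+1)/(j+1)"
    proof -
      have nz: "real j + 1 \<noteq> 0" by simp
      have "(2*real j+2)*(2*real j+1) = (2*(2*real j+1)) * (real j+1)" by (simp add: algebra_simps)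
      then show ?thesis using mult_divide_mult_cancel_right[OF nz, of "2*(2*real j+1)" "real j+1"] by (simp add: add.commute)
    qed
    show ?thesis unfolding f2 c_def f1 a b by simp
  qed
  have ineq: "(2*(2*real j+1)/(real j+1))^2 * (3*real j+4) \<le> 16 * (3*real j+1)"
  proof -
    have "(2*(2*real j+1))^2 * (3*real j+4) \<le> 16 * (3*real j+1) * (real j+1)^2"
      by (simp add: power2_eq_square algebra_simps)
    then show ?thesis by (simp add: power_divide field_simps)
  qed
  have "(real ((2*Suc j) choose Suc j))^2 * (3*Suc j+1) = (2*(2*real j+1)/(real j+1))^2 * (3*real j+4) * c^2"
  proof -
    define r where "r = 2*(2*real j+1)/(real j+1)"
    have "real ((2*Suc j) choose Suc j) = r * c" unfolding rel r_def by (simp add: add.commute)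
    moreover have "real (3*Suc j+1) = 3*real j+4" by simp
    ultimately show ?thesis unfolding r_def[symmetric] by (simp only: power_mult_distrib mult_ac)
  qed
  also have "\<dots> \<le> 16 * (3*real j+1) * c^2"
    by (rule mult_right_mono[OF ineq]) simp
  also have "\<dots> \<le> 16 * 16^j" using Suc.IH unfolding c_def by (simp add: algebra_simps)
  finally show ?case by simp
qed

lemma cb_central: "(real (m choose (m div 2)))^2 * (m+1) \<le> 4^m"
proof (cases "even m")
  case True
  then obtain j where m: "m = 2*j" by blast
  have "(real (m choose (m div 2)))^2 * (m+1) \<le> (real ((2*j) choose j))^2 * (3*j+1)"
    unfolding m by (intro mult_mono) auto
  also have "\<dots> \<le> 16^j" by (rule cb_even)
  also have "\<dots> = 4^m" unfolding m by (simp add: power_mult)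
  finally show ?thesis .
next
  case False
  then obtain j where m: "m = 2*j+1" using oddE by blast
  have md: "m div 2 = j" unfolding m by simp
  have sym: "(2*j+1) choose (Suc j) = (2*j+1) choose j"
    using binomial_symmetric[of "Suc j" "2*j+1"] by simp
  have pas: "(2*Suc j) choose (Suc j) = 2 * ((2*j+1) choose j)"
    using binomial_Suc_Suc[of "2*j+1" j] sym by simp
  have e: "(real ((2*Suc j) choose Suc j))^2 * (3*Suc j+1) \<le> 16^Suc j" by (rule cb_even)
  have "(real (m choose (m div 2)))^2 * (m+1) = (real ((2*Suc j) choose Suc j))^2 * (2*j+2) / 4"
    unfolding md m pas by (simp add: power2_eq_square algebra_simps)
  also have "\<dots> \<le> (real ((2*Suc j) choose Suc j))^2 * (3*Suc j+1) / 4"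
    by (intro divide_right_mono mult_left_mono) auto
  also have "\<dots> \<le> 16^Suc j / 4" using e by simp
  also have "\<dots> = 4^m" unfolding m by (simp add: power_mult power_add)
  finally show ?thesis .
qed

lemma cb: "(real (m choose k))^2 * (m+1) \<le> 4^m"
proof -
  have "(real (m choose k))^2 * (m+1) \<le> (real (m choose (m div 2)))^2 * (m+1)"
    using binomial_maximum[of m k] by (intro mult_right_mono power_mono) auto
  also have "\<dots> \<le> 4^m" by (rule cb_central)
  finally show ?thesis .
qed

lemma exp_sums_r: "(\<lambda>n. x^n / fact n) sums exp (x::real)"
  using exp_converges[of x] by (simp add: divide_inverse mult.commute)

lemma exp_part: "0 \<le> (x::real) \<Longrightarrow> finite I \<Longrightarrow> (\<Sum>n\<in>I. x^n / fact n) \<le> exp x"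
  using sum_le_suminf[of "\<lambda>n. x^n / fact n" I] exp_sums_r[of x]
  by (simp add: sums_iff)

lemma termbound:
  assumes t: "0 \<le> (t::real)"
  shows "(t/2)^(2*k+n) / (fact k * fact (k+n)) \<le> t^(2*k+n) / fact (2*k+n) / sqrt (2*k+n+1)"
proof -
  define m where "m = 2*k+n"
  have km: "k \<le> m" and mk: "m - k = k+n" unfolding m_def by auto
  define C where "C = real (m choose k)"
  have Cf: "C = fact m / (fact k * fact (k+n))"
    unfolding C_def using binomial_fact[OF km] mk by simp
  have C0: "0 \<le> C" unfolding C_def by simp
  have "C * sqrt (m+1) = sqrt (C^2 * (m+1))" using C0 by (simp add: real_sqrt_mult)
  also have "\<dots> \<le> sqrt (4^m)" unfolding C_def using cb[of m k] by (intro real_sqrt_le_mono) simp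
  also have "\<dots> = 2^m"
  proof -
    have "(4::real)^m = (2^2)^m" by simp
    also have "\<dots> = (2^m)^2" by (simp only: power_mult[symmetric] mult.commute)
    finally have "(4::real)^m = (2^m)^2" .
    then show ?thesis by simp
  qed
  finally have Cb: "C * sqrt (m+1) \<le> 2^m" .
  have sp: "0 < sqrt (real m + 1)" by simp
  have "(t/2)^m / (fact k * fact (k+n)) = t^m / fact m * (C / 2^m)"
    unfolding Cf by (simp add: power_divide)
  also have "\<dots> \<le> t^m / fact m * (1 / sqrt (m+1))"
  proof (rule mult_left_mono)
    show "C / 2^m \<le> 1 / sqrt (m+1)" using Cb sp by (simp add: field_simps)
  qed (use t in simp)
  finally show ?thesis unfolding m_def by (simp add: add.commute)
qed

lemma amgm_sqrt:
  assumes t: "0 < (t::real)"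
  shows "1 / sqrt (real m + 1) \<le> (sqrt t / (real m + 1) + 1 / sqrt t) / 2"
proof -
  define s where "s = sqrt t"
  define q where "q = sqrt (real m + 1)"
  have s0: "0 < s" unfolding s_def using t by simp
  have q0: "0 < q" unfolding q_def by simp
  have qq: "real m + 1 = q^2" unfolding q_def by simp
  have "2 * s * q \<le> s^2 + q^2" using sum_squares_bound[of s q] by simp
  then have "1 / q \<le> (s / q^2 + 1 / s) / 2" using s0 q0
    by (simp add: field_simps power2_eq_square)
  then show ?thesis unfolding s_def q_def by simp
qed

lemma poisson_part:
  assumes t: "0 < (t::real)"
  shows "(\<Sum>m<M. t^m / fact m / sqrt (real m + 1)) \<le> exp t / sqrt t"
proof -
  have st: "0 < sqrt t" using t by simp
  have "(\<Sum>m<M. t^m / fact m / sqrt (real m + 1))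
      \<le> (\<Sum>m<M. t^m / fact m * ((sqrt t / (real m + 1) + 1 / sqrt t) / 2))"
  proof (rule sum_mono)
    fix m
    have "t^m / fact m / sqrt (real m + 1) = t^m / fact m * (1 / sqrt (real m + 1))" by simp
    also have "\<dots> \<le> t^m / fact m * ((sqrt t / (real m + 1) + 1 / sqrt t) / 2)"
      by (rule mult_left_mono[OF amgm_sqrt[OF t]]) (use t in simp)
    finally show "t^m / fact m / sqrt (real m + 1) \<le> \<dots>" .
  qed
  also have "\<dots> = (1 / sqrt t * (\<Sum>m<M. t^(Suc m) / fact (Suc m)) + 1 / sqrt t * (\<Sum>m<M. t^m / fact m)) / 2"
  proof -
    have "t^m / fact m * ((sqrt t / (real m + 1) + 1 / sqrt t) / 2)
        = (1 / sqrt t * (t^(Suc m) / fact (Suc m)) + 1 / sqrt t * (t^m / fact m)) / 2" for m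
    proof -
      have e1: "t = sqrt t * sqrt t" using t by simp
      have e2: "(fact (Suc m) :: real) = (real m + 1) * fact m" by simp
      have e3: "t^(Suc m) = t * t^m" by simp
      have gen: "P / F * ((s / (a + 1) + 1 / s) / 2) = (1 / s * (s * s * P / ((a + 1) * F)) + 1 / s * (P / F)) / 2"
        if "s > 0" "a \<ge> 0" "F > 0" for s a F P :: real
      proof -
        have "a + 1 \<noteq> 0" using that by simp
        then show ?thesis using that by (simp add: divide_simps) (simp add: algebra_simps)
      qed
      show ?thesis unfolding e2 e3 using gen[OF st, of "real m" "fact m" "t^m"] e1 by simp
    qed
    then have "(\<Sum>m<M. t^m / fact m * ((sqrt t / (real m + 1) + 1 / sqrt t) / 2))
      = (\<Sum>m<M. (1 / sqrt t * (t^(Suc m) / fact (Suc m)) + 1 / sqrt t * (t^m / fact m)) / 2)"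
      by (intro sum.cong) auto
    also have "\<dots> = (\<Sum>m<M. 1 / sqrt t * (t^(Suc m) / fact (Suc m)) + 1 / sqrt t * (t^m / fact m)) / 2"
      by (simp only: sum_divide_distrib)
    also have "\<dots> = (1 / sqrt t * (\<Sum>m<M. t^(Suc m) / fact (Suc m)) + 1 / sqrt t * (\<Sum>m<M. t^m / fact m)) / 2"
      by (simp only: sum.distrib sum_distrib_left)
    finally show ?thesis .
  qed
  also have "\<dots> \<le> (1 / sqrt t * exp t + 1 / sqrt t * exp t) / 2"
  proof -
    have a: "(\<Sum>m<M. t^(Suc m) / fact (Suc m)) \<le> exp t"
    proof -
      have "(\<Sum>m<M. t^(Suc m) / fact (Suc m)) = (\<Sum>m\<in>Suc ` {..<M}. t^m / fact m)"
        by (simp add: sum.reindex)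
      also have "\<dots> \<le> exp t" by (rule exp_part) (use t in auto)
      finally show ?thesis .
    qed
    have b: "(\<Sum>m<M. t^m / fact m) \<le> exp t" by (rule exp_part) (use t in auto)
    show ?thesis using a b st by (intro divide_right_mono add_mono mult_left_mono) auto
  qed
  also have "\<dots> = exp t / sqrt t" by simp
  finally show ?thesis .
qed

definition hkt :: "real \<Rightarrow> nat \<Rightarrow> nat \<Rightarrow> real" where
  "hkt t n k = (t/2)^(2*k+n) / (fact k * fact (k+n))"

lemma heat_kernel_hkt: "heat_kernel t x = exp (-t) * suminf (hkt t (nat \<bar>x\<bar>))"
  unfolding heat_kernel_def hkt_def by simp

lemma hkt_nonneg: "0 \<le> t \<Longrightarrow> 0 \<le> hkt t n k"
  unfolding hkt_def by simp

lemma hkt_part: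
  assumes t: "0 < t"
  shows "(\<Sum>k<N. hkt t n k) \<le> exp t / sqrt t"
proof -
  define g where "g m = t^m / fact m / sqrt (real m + 1)" for m
  have g0: "0 \<le> g m" for m unfolding g_def using t by simp
  have "(\<Sum>k<N. hkt t n k) \<le> (\<Sum>k<N. g (2*k+n))"
    by (rule sum_mono) (use termbound[of t] t in \<open>simp add: hkt_def g_def add_ac\<close>)
  also have "\<dots> = (\<Sum>m\<in>(\<lambda>k. 2*k+n) ` {..<N}. g m)"
    by (subst sum.reindex) (auto simp: inj_on_def)
  also have "\<dots> \<le> (\<Sum>m<2*N+n. g m)"
    by (rule sum_mono2) (auto simp: g0)
  also have "\<dots> \<le> exp t / sqrt t" unfolding g_def by (rule poisson_part[OF t])
  finally show ?thesis .
qed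

lemma hkt_summable: "0 < t \<Longrightarrow> summable (hkt t n)"
  by (rule summableI_nonneg_bounded[OF hkt_nonneg hkt_part]) auto

lemma heat_nonneg: "0 < t \<Longrightarrow> 0 \<le> heat_kernel t x"
  unfolding heat_kernel_hkt
  by (intro mult_nonneg_nonneg suminf_nonneg hkt_summable hkt_nonneg) auto

lemma heat_bound: assumes t: "0 < t" shows "heat_kernel t x \<le> t powr (-1/2)"
proof -
  have "suminf (hkt t (nat \<bar>x\<bar>)) \<le> exp t / sqrt t"
    by (rule suminf_le_const[OF hkt_summable[OF t] hkt_part[OF t]])
  then have "heat_kernel t x \<le> exp (-t) * (exp t / sqrt t)"
    unfolding heat_kernel_hkt by (intro mult_left_mono) auto
  also have "\<dots> = 1 / sqrt t" by (simp add: exp_minus field_simps)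
  also have "\<dots> = t powr (-1/2)" using t
    by (simp add: powr_half_sqrt[symmetric] powr_minus_divide[symmetric])
  finally show ?thesis .
qed

lemma hkt_mu:
  assumes r: "0 < (r::real)"
  shows "hkt t z k * r^z = (t*r/2)^(k+z) / fact (k+z) * ((t/(2*r))^k / fact k)"
proof -
  have "(t*r/2)^(k+z) * (t/(2*r))^k = (t/2)^(2*k+z) * r^z"
  proof -
    have "(t*r/2)^(k+z) * (t/(2*r))^k = ((t/2)^(k+z) * r^k * r^z) * ((t/2)^k / r^k)"
      by (simp add: power_mult_distrib power_divide power_add field_simps)
    also have "\<dots> = (t/2)^(k+z) * (t/2)^k * r^z" using r by (simp add: field_simps)
    also have "\<dots> = (t/2)^(2*k+z) * r^z" by (simp add: power_add[symmetric] mult_2 add_ac)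
    finally show ?thesis .
  qed
  then show ?thesis unfolding hkt_def by (simp add: field_simps)
qed

lemma gen_bound:
  assumes t: "0 < t" and r: "0 < (r::real)"
  shows "(\<Sum>z<N. heat_kernel t (int z) * r^z) \<le> exp (t * ((r + 1/r)/2 - 1))"
proof -
  define a where "a = t*r/2"
  define b where "b = t/(2*r)"
  have a0: "0 \<le> a" and b0: "0 \<le> b" unfolding a_def b_def using t r by auto
  define c where "c z k = a^(k+z) / fact (k+z) * (b^k / fact k)" for z k
  have c0: "0 \<le> c z k" for z k unfolding c_def using a0 b0 by simp
  have ca: "(\<Sum>z\<in>Z. a^(k+z) / fact (k+z)) \<le> exp a" if "finite Z" for Z k
  proof -
    have "(\<Sum>z\<in>Z. a^(k+z) / fact (k+z)) = (\<Sum>j\<in>(\<lambda>z. k+z) ` Z. a^j / fact j)"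
      by (subst sum.reindex) (auto simp: inj_on_def)
    also have "\<dots> \<le> exp a" by (rule exp_part) (use a0 that in auto)
    finally show ?thesis .
  qed
  have bs: "summable (\<lambda>k. b^k / fact k)" using exp_sums_r[of b] by (rule sums_summable)
  have cle: "(\<Sum>z\<in>Z. c z k) \<le> exp a * (b^k / fact k)" if "finite Z" for Z k
  proof -
    have "(\<Sum>z\<in>Z. c z k) = (\<Sum>z\<in>Z. a^(k+z) / fact (k+z)) * (b^k / fact k)"
      unfolding c_def by (simp only: sum_distrib_right)
    also have "\<dots> \<le> exp a * (b^k / fact k)"
      by (rule mult_right_mono[OF ca[OF that]]) (use b0 in simp)
    finally show ?thesis .
  qed
  have cs: "summable (c z)" for z
  proof (rule summable_comparison_test'[OF summable_mult[OF bs, of "exp a"]])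
    fix k :: nat assume "k \<ge> 0"
    show "norm (c z k) \<le> exp a * (b^k / fact k)" using cle[of "{z}" k] c0[of z k] by simp
  qed
  have hk: "heat_kernel t (int z) * r^z = exp (-t) * suminf (c z)" for z
  proof -
    have "heat_kernel t (int z) * r^z = exp (-t) * (suminf (hkt t z) * r^z)"
      unfolding heat_kernel_hkt by simp
    also have "suminf (hkt t z) * r^z = (\<Sum>k. hkt t z k * r^z)"
      by (rule suminf_mult2[OF hkt_summable[OF t]])
    also have "\<dots> = suminf (c z)" unfolding c_def a_def b_def hkt_mu[OF r] ..
    finally show ?thesis .
  qed
  have "(\<Sum>z<N. heat_kernel t (int z) * r^z) = exp (-t) * (\<Sum>z<N. suminf (c z))"
    unfolding hk by (simp add: sum_distrib_left)
  also have "(\<Sum>z<N. suminf (c z)) = (\<Sum>k. \<Sum>z<N. c z k)"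
    by (rule suminf_sum[symmetric]) (rule cs)
  also have "\<dots> \<le> (\<Sum>k. exp a * (b^k / fact k))"
    by (rule suminf_le[OF cle summable_sum summable_mult[OF bs]]) (auto intro: cs)
  also have "\<dots> = exp a * exp b" using sums_mult[OF exp_sums_r[of b], of "exp a"] by (simp add: sums_iff)
  finally have "(\<Sum>z<N. heat_kernel t (int z) * r^z) \<le> exp (-t) * (exp a * exp b)"
    by (simp add: mult_left_mono)
  also have "\<dots> = exp (t * ((r + 1/r)/2 - 1))"
    unfolding a_def b_def using r by (simp add: exp_add[symmetric] field_simps)
  finally show ?thesis .
qed

lemma robin_sum_bound:
  fixes x y :: nat
  assumes t: "0 < t" and r: "0 < (r::real)" and r1: "r \<le> r1" and r1': "1 \<le> r1"
  defines "f \<equiv> (\<lambda>n. heat_kernel t (int x + int y + int (n + 2)) * r ^ (n + 2))"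
  shows "summable f" "\<And>n. 0 \<le> f n" "suminf f \<le> exp (t * ((r1 + 1/r1)/2 - 1))"
proof -
  define M where "M = x + y"
  define g where "g z = heat_kernel t (int z) * r1 ^ z" for z
  have g0: "0 \<le> g z" for z unfolding g_def using heat_nonneg[OF t] r1' by simp
  show f0: "0 \<le> f n" for n unfolding f_def using heat_nonneg[OF t] r by simp
  have fg: "f n \<le> g (M + n + 2)" for n
  proof -
    have e: "int x + int y + int (n + 2) = int (M + n + 2)" unfolding M_def by simp
    have "r ^ (n+2) \<le> r1 ^ (n+2)" using r r1 by (intro power_mono) auto
    also have "\<dots> \<le> r1 ^ (M + n + 2)" using r1' by (intro power_increasing) auto
    finally show ?thesis unfolding f_def g_def e
      by (intro mult_left_mono heat_nonneg[OF t])
  qed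
  have part: "(\<Sum>n<N. f n) \<le> exp (t * ((r1 + 1/r1)/2 - 1))" for N
  proof -
    have "(\<Sum>n<N. f n) \<le> (\<Sum>n<N. g (M + n + 2))" by (rule sum_mono[OF fg])
    also have "\<dots> = (\<Sum>z\<in>(\<lambda>n. M + n + 2) ` {..<N}. g z)"
      by (subst sum.reindex) (auto simp: inj_on_def)
    also have "\<dots> \<le> (\<Sum>z<M + N + 2. g z)" by (rule sum_mono2) (auto simp: g0)
    also have "\<dots> \<le> exp (t * ((r1 + 1/r1)/2 - 1))" unfolding g_def
      by (rule gen_bound[OF t]) (use r1' in simp)
    finally show ?thesis .
  qed
  show sf: "summable f" by (rule summableI_nonneg_bounded[OF f0 part])
  show "suminf f \<le> exp (t * ((r1 + 1/r1)/2 - 1))" by (rule suminf_le_const[OF sf part])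
qed

lemma powi_m2: "(r::real) powi (-2) = inverse (r^2)"
  by (simp add: power_int_minus)

theorem mainTheorem7:
  fixes A :: real
  shows "\<exists>C K. \<exists>\<epsilon>0 > 0. \<forall>\<epsilon>. 0 < \<epsilon> \<and> \<epsilon> < \<epsilon>0 \<longrightarrow>
           (\<forall>t > 0. \<forall>x y :: nat.
              robin_kernel A \<epsilon> t x y \<le> C * (t powr (-1/2) + \<epsilon>) * exp (K * \<epsilon>\<^sup>2 * t))"
proof -
  have main: "robin_kernel A e t x y \<le> (3 + 3 * \<bar>A\<bar>) * (t powr (-1/2) + e) * exp (A^2 / 2 * e^2 * t)"
    if e: "0 < e \<and> e < 1 / (2 * (\<bar>A\<bar> + 1))" and t: "0 < t" for e t :: real and x y :: nat
  proof -
  define m where "m = mu A e"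
  define S where "S = (\<Sum>n. heat_kernel t (int x + int y + int (n + 2)) * m ^ (n + 2))"
  define P where "P = t powr (-1/2)"
  define E where "E = exp (A^2 / 2 * e^2 * t)"
  have P0: "0 \<le> P" unfolding P_def by simp
  have E1: "1 \<le> E" unfolding E_def using t by simp
  have Ae: "\<bar>A\<bar> * e \<le> 1/2"
  proof -
    have "e * (2 * (\<bar>A\<bar> + 1)) < 1" using e by (simp add: field_simps)
    then show ?thesis using e by (simp add: algebra_simps)
  qed
  have e0: "0 < e" using e by simp
  have AeA: "\<bar>A * e\<bar> \<le> 1/2" using Ae e0 by (simp add: abs_mult)
  have m_lo: "1/2 \<le> m" and m_hi: "m \<le> 3/2" unfolding m_def mu_def using AeA by (auto simp: abs_le_iff)
  have mpos: "0 < m" using m_lo by simp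
  have rk: "robin_kernel A e t x y = heat_kernel t (int x - int y) + m * heat_kernel t (int x + int y + 1)
      + (1 - inverse (m^2)) * S"
    unfolding robin_kernel_def m_def S_def powi_m2 ..
  have h1: "heat_kernel t (int x - int y) \<le> P" unfolding P_def by (rule heat_bound[OF t])
  have h2: "heat_kernel t (int x + int y + 1) \<le> P" unfolding P_def by (rule heat_bound[OF t])
  have h2': "m * heat_kernel t (int x + int y + 1) \<le> 3/2 * P"
    using mult_mono[OF m_hi h2] heat_nonneg[OF t] by simp
  have goal_rhs: "(3 + 3 * \<bar>A\<bar>) * (P + e) * E \<ge> 3 * P + 3 * \<bar>A\<bar> * e * E"
  proof -
    have "(3 + 3 * \<bar>A\<bar>) * (P + e) * E = 3 * P * E + 3 * e * E + 3 * \<bar>A\<bar> * P * E + 3 * \<bar>A\<bar> * e * E"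
      by (simp add: algebra_simps)
    moreover have "3 * P \<le> 3 * P * E" using P0 E1 by (simp add: mult_le_cancel_left1)
    moreover have "0 \<le> 3 * e * E" using e0 E1 by simp
    moreover have "0 \<le> 3 * \<bar>A\<bar> * P * E" using P0 E1 by simp
    ultimately show ?thesis by linarith
  qed
  show "robin_kernel A e t x y \<le> (3 + 3 * \<bar>A\<bar>) * (t powr (-1/2) + e) * exp (A^2 / 2 * e^2 * t)"
  proof (cases "0 \<le> A")
    case True
    have m1: "m \<le> 1" unfolding m_def mu_def using True e0 by simp
    have S0: "0 \<le> S" unfolding S_def
      using robin_sum_bound(1,2)[OF t mpos m1 order_refl, of x y] by (intro suminf_nonneg) auto
    have "m^2 \<le> 1" using m1 mpos by (simp add: power_le_one)
    then have "1 \<le> inverse (m^2)" using mpos by (simp add: one_le_inverse_iff)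
    then have "(1 - inverse (m^2)) * S \<le> 0" using S0 by (simp add: mult_nonpos_nonneg)
    then have "robin_kernel A e t x y \<le> P + 3/2 * P" unfolding rk using h1 h2' by linarith
    moreover have "0 \<le> 3 * \<bar>A\<bar> * e * E" using e0 E1 by simp
    ultimately show ?thesis using goal_rhs P0 unfolding P_def E_def by linarith
  next
    case False
    have m1: "1 \<le> m" unfolding m_def mu_def using False e0 by (simp add: mult_nonpos_nonneg)
    have Sb: "S \<le> exp (t * ((m + 1/m)/2 - 1))" unfolding S_def
      by (rule robin_sum_bound(3)[OF t mpos order_refl m1])
    have ex: "t * ((m + 1/m)/2 - 1) \<le> A^2 / 2 * e^2 * t"
    proof -
      have "(m + 1/m)/2 - 1 = (m - 1)^2 / (2 * m)" using mpos by (simp add: field_simps power2_eq_square)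
      also have "\<dots> \<le> (m - 1)^2 / 2" using m1 by (intro divide_left_mono) auto
      also have "(m - 1)^2 = A^2 * e^2" unfolding m_def mu_def by (simp add: power2_eq_square)
      finally show ?thesis using t by (simp add: mult.commute mult_left_mono)
    qed
    have SE: "S \<le> E" unfolding E_def using Sb ex by (meson exp_le_cancel_iff order_trans)
    have S0: "0 \<le> S" unfolding S_def
      using robin_sum_bound(1,2)[OF t mpos order_refl m1, of x y] by (intro suminf_nonneg) auto
    have coef: "1 - inverse (m^2) \<le> 3 * \<bar>A\<bar> * e"
    proof -
      have "1 - inverse (m^2) = (m - 1) * (m + 1) / m^2" using mpos by (simp add: field_simps power2_eq_square)
      also have "\<dots> \<le> (m - 1) * (m + 1)" 
      proof -
        have "0 \<le> (m - 1) * (m + 1)" using m1 by simp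
        moreover have "1 \<le> m^2" using m1 by (simp add: one_le_power)
        ultimately show ?thesis using mpos by (simp add: divide_le_eq mult_le_cancel_left1)
      qed
      also have "\<dots> \<le> (m - 1) * 3" using m1 m_hi by (intro mult_left_mono) auto
      also have "m - 1 = \<bar>A\<bar> * e" unfolding m_def mu_def using False by simp
      finally show ?thesis by simp
    qed
    have coef0: "0 \<le> 1 - inverse (m^2)" using m1 by (simp add: inverse_le_1_iff one_le_power)
    have "(1 - inverse (m^2)) * S \<le> 3 * \<bar>A\<bar> * e * E"
      using mult_mono[OF coef SE _ S0] e0 by simp
    then have "robin_kernel A e t x y \<le> P + 3/2 * P + 3 * \<bar>A\<bar> * e * E" unfolding rk using h1 h2' by linarith
    then show ?thesis using goal_rhs P0 unfolding P_def E_def by linarith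
  qed
  qed
  have pos: "0 < 1 / (2 * (\<bar>A\<bar> + 1))" by (simp add: add_pos_nonneg)
  show ?thesis
    apply (rule exI[of _ "3 + 3 * \<bar>A\<bar>"], rule exI[of _ "A^2 / 2"], rule exI[of _ "1 / (2 * (\<bar>A\<bar> + 1))"])
    using main pos by simp
qed

end
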